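(* Consider the ordered streaming model for trees without vertex moves (defined in the context). For every drawing algorithm in this model there exist a tree with $n$ edges and an order of arrival of its edges (together with the rotation information) for which the algorithm's drawing requires area $\Omega(2^{n/2})$.
   Context: Ordered streaming model: a connected graph $G$ (here a tree) is revealed one edge at a time; at all times the revealed graph is connected and edges never disappear. Together with each new edge $e$ the algorithm is told the position of $e$ in the clockwise cyclic order of the edges incident to each of its endpoints (among the edges incident to that endpoint). Upon arrival, $e$ must immediately be incorporated into a planar straight-line drawing of the current graph in which every vertex is placed at a grid point (integer coordinates), consistent with the given clockwise orders. "Without vertex moves" means that once a vertex has been placed, its position never changes. The area of a drawing is the area of the smallest axis-parallel bounding box of the grid points used. *)

theory Defs
  imports "HOL-Analysis.Analysis"
begin

(* Input encoding (canonical vertex names = order of appearance).  Item k (k = 0,1,...) is the k-th arriving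
   edge; it joins the already present vertex p (p \<le> k) with the new vertex k+1
   (edge 0 joins vertices 0 and 1).  r is the position of the new edge in the
   clockwise cyclic order at p: the clockwise order at each vertex is recorded as
   a list starting with its oldest incident edge, and the new edge is inserted at
   list index r, 1 \<le> r \<le> deg(p)  (r = 0 iff p had no edge yet, i.e. k = 0). *)

fun rot_aux :: "nat \<Rightarrow> (nat \<times> nat) list \<Rightarrow> (nat \<Rightarrow> nat list) \<Rightarrow> (nat \<Rightarrow> nat list)" where
  "rot_aux k [] R = R"
| "rot_aux k ((p, r) # s) R =
     rot_aux (Suc k) s
       (R(p := take r (R p) @ [Suc k] @ drop r (R p), Suc k := [p]))"

definition rotation :: "(nat \<times> nat) list \<Rightarrow> nat \<Rightarrow> nat list" where
  "rotation s = rot_aux 0 s (\<lambda>_. [])"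

definition valid_stream :: "(nat \<times> nat) list \<Rightarrow> bool" where
  "valid_stream s \<longleftrightarrow>
     (\<forall>k < length s.
        fst (s ! k) \<le> k \<and>
        (let d = length (rotation (take k s) (fst (s ! k)))
         in if d = 0 then snd (s ! k) = 0 else 1 \<le> snd (s ! k) \<and> snd (s ! k) \<le> d))"

definition tree_verts :: "(nat \<times> nat) list \<Rightarrow> nat set" where
  "tree_verts s = {0 .. length s}"

definition tree_edges :: "(nat \<times> nat) list \<Rightarrow> (nat \<times> nat) set" where
  "tree_edges s = {(fst (s ! k), Suc k) | k. k < length s}"

definition pt :: "int \<times> int \<Rightarrow> complex" where
  "pt q = Complex (of_int (fst q)) (of_int (snd q))"

(* clockwise angle (in [0, 2 pi)) from direction a to direction b *)
definition cw_angle :: "complex \<Rightarrow> complex \<Rightarrow> real" where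
  "cw_angle a b = Arg2pi (a / b)"

definition seg :: "(nat \<Rightarrow> int \<times> int) \<Rightarrow> nat \<times> nat \<Rightarrow> complex set" where
  "seg P e = closed_segment (pt (P (fst e))) (pt (P (snd e)))"

definition good_drawing :: "(nat \<times> nat) list \<Rightarrow> (nat \<Rightarrow> int \<times> int) \<Rightarrow> bool" where
  "good_drawing s P \<longleftrightarrow>
     inj_on P (tree_verts s) \<and>
     (\<forall>e \<in> tree_edges s. \<forall>f \<in> tree_edges s. e \<noteq> f \<longrightarrow>
        seg P e \<inter> seg P f \<subseteq> (\<lambda>v. pt (P v)) ` ({fst e, snd e} \<inter> {fst f, snd f})) \<and>
     (\<forall>e \<in> tree_edges s. \<forall>w \<in> tree_verts s. w \<notin> {fst e, snd e} \<longrightarrow>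
        pt (P w) \<notin> seg P e) \<and>
     (\<forall>v \<in> tree_verts s.
        let ns = rotation s v;
            dir = (\<lambda>w. pt (P w) - pt (P v))
        in sorted_wrt (<) (map (\<lambda>w. cw_angle (dir (hd ns)) (dir w)) ns))"

(* An algorithm A places vertex v at A (first v items): vertex 0 at A [], vertex k+1
   at the moment item k arrives, knowing only items 0..k.  Positions never change. *)
definition placement :: "((nat \<times> nat) list \<Rightarrow> int \<times> int) \<Rightarrow> (nat \<times> nat) list \<Rightarrow> nat \<Rightarrow> int \<times> int" where
  "placement A s v = A (take v s)"

definition streaming_algorithm :: "((nat \<times> nat) list \<Rightarrow> int \<times> int) \<Rightarrow> bool" where
  "streaming_algorithm A \<longleftrightarrow>
     (\<forall>s. valid_stream s \<longrightarrow> good_drawing s (placement A s))"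

definition drawing_area :: "(nat \<times> nat) list \<Rightarrow> (nat \<Rightarrow> int \<times> int) \<Rightarrow> int" where
  "drawing_area s P =
     (let X = (\<lambda>v. fst (P v)) ` tree_verts s; Y = (\<lambda>v. snd (P v)) ` tree_verts s
      in (Max X - Min X) * (Max Y - Min Y))"

end

theory Submission
  imports Defs
begin

lemma rot_aux_snoc:
  "rot_aux k (s @ [(p, r)]) R =
     (let R' = rot_aux k s R in
        R'(p := take r (R' p) @ [Suc (k + length s)] @ drop r (R' p), Suc (k + length s) := [p]))"
  by (induction s arbitrary: k R) (auto simp: Let_def)

lemma rotation_snoc:
  "rotation (s @ [(p, r)]) =
     (let R' = rotation s in
        R'(p := take r (R' p) @ [Suc (length s)] @ drop r (R' p), Suc (length s) := [p]))"
  unfolding rotation_def by (simp add: rot_aux_snoc)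

lemma rotation_snoc0:
  "rotation (s @ [(0, r)]) 0 = take r (rotation s 0) @ [Suc (length s)] @ drop r (rotation s 0)"
  by (simp add: rotation_snoc Let_def)

definition star :: "(nat \<times> nat) list \<Rightarrow> bool" where
  "star s \<longleftrightarrow> (\<forall>k < length s. fst (s ! k) = 0)"

lemma star_snoc: "star (s @ [(0, r)]) \<longleftrightarrow> star s"
  unfolding star_def by (auto simp: nth_append less_Suc_eq)

lemma star_rot: "star s \<Longrightarrow> length (rotation s 0) = length s \<and> set (rotation s 0) \<subseteq> {1..length s}"
proof (induction s rule: rev_induct)
  case Nil
  then show ?case by (simp add: rotation_def)
next
  case (snoc x xs)
  obtain p r where x: "x = (p, r)" by fastforce
  have p: "p = 0" using snoc.prems x unfolding star_def by (auto simp: nth_append)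
  have "star xs" using snoc.prems x p star_snoc by auto
  with snoc.IH have ih: "length (rotation xs 0) = length xs" "set (rotation xs 0) \<subseteq> {1..length xs}" by auto
  have "set (take r (rotation xs 0)) \<union> set (drop r (rotation xs 0)) = set (rotation xs 0)"
    by (metis append_take_drop_id set_append)
  then show ?case using ih by (auto simp: x p rotation_snoc0)
qed

lemma valid_snoc:
  assumes "valid_stream s" "p \<le> length s"
    "let d = length (rotation s p) in if d = 0 then r = 0 else 1 \<le> r \<and> r \<le> d"
  shows "valid_stream (s @ [(p, r)])"
  unfolding valid_stream_def
proof (intro allI impI)
  fix k assume k: "k < length (s @ [(p, r)])"
  show "fst ((s @ [(p, r)]) ! k) \<le> k \<and>
         (let d = length (rotation (take k (s @ [(p, r)])) (fst ((s @ [(p, r)]) ! k)))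
          in if d = 0 then snd ((s @ [(p, r)]) ! k) = 0
             else 1 \<le> snd ((s @ [(p, r)]) ! k) \<and> snd ((s @ [(p, r)]) ! k) \<le> d)"
  proof (cases "k < length s")
    case True
    then have e: "(s @ [(p, r)]) ! k = s ! k" "take k (s @ [(p, r)]) = take k s"
      by (auto simp: nth_append)
    show ?thesis unfolding e using assms(1) True unfolding valid_stream_def by blast
  next
    case False
    then have kk: "k = length s" using k by simp
    show ?thesis unfolding kk using assms(2,3) by (simp add: Let_def split: if_splits)
  qed
qed

lemma placement_append: "v \<le> length s \<Longrightarrow> placement A (s @ t) v = placement A s v"
  unfolding placement_def by simp

definition angl :: "((nat \<times> nat) list \<Rightarrow> int \<times> int) \<Rightarrow> (nat \<times> nat) list \<Rightarrow> nat \<Rightarrow> real" where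
  "angl A s v = cw_angle (pt (placement A s 1) - pt (placement A s 0))
                         (pt (placement A s v) - pt (placement A s 0))"

lemma angl_append: "v \<le> length s \<Longrightarrow> 1 \<le> length s \<Longrightarrow> angl A (s @ t) v = angl A s v"
  unfolding angl_def by (simp add: placement_append)

definition gap_lo where "gap_lo A s r = angl A s (rotation s 0 ! (r - 1))"
definition gap_mid where "gap_mid A s r = angl A s (rotation s 0 ! r)"
definition gap_hi where
  "gap_hi A s r = (if Suc r < length s then angl A s (rotation s 0 ! Suc r) else 2 * pi)"

definition adv_step :: "((nat \<times> nat) list \<Rightarrow> int \<times> int) \<Rightarrow> (nat \<times> nat) list \<Rightarrow> nat \<Rightarrow> (nat \<times> nat) list \<times> nat" where
  "adv_step A s r =
      (if 2 * (gap_mid A s r - gap_lo A s r) \<le> gap_hi A s r - gap_lo A s r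
      then (s @ [(0, r)], r) else (s @ [(0, Suc r)], Suc r))"

fun adv :: "((nat \<times> nat) list \<Rightarrow> int \<times> int) \<Rightarrow> nat \<Rightarrow> (nat \<times> nat) list \<times> nat" where
  "adv A 0 = ([(0,0),(0,1)], 1)"
| "adv A (Suc k) = adv_step A (fst (adv A k)) (snd (adv A k))"

definition Inv where
  "Inv A s r \<longleftrightarrow> valid_stream s \<and> star s \<and> 2 \<le> length s \<and> 1 \<le> r \<and> r < length s \<and>
     rotation s 0 ! r = length s \<and> rotation s 0 ! 0 = 1 \<and>
     gap_hi A s r - gap_lo A s r \<le> 2 * pi / 2 ^ (length s - 2)"

lemma Inv_init: "Inv A [(0,0),(0,1)] 1"
proof -
  have v: "valid_stream [(0,0),(0,1)]"
    unfolding valid_stream_def by (auto simp: less_Suc_eq rotation_def)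
  have r: "rotation [(0,0),(0,1)] 0 = [1,2]" by (simp add: rotation_def)
  have "gap_lo A [(0,0),(0,1)] 1 = 0"
    unfolding gap_lo_def angl_def cw_angle_def r
    by (cases "pt (placement A [(0, 0), (0, 1)] 1) - pt (placement A [(0, 0), (0, 1)] 0) = 0") (auto simp: Arg2pi_of_real[of 1, simplified])
  moreover have "gap_hi A [(0,0),(0,1)] 1 = 2 * pi" unfolding gap_hi_def by simp
  ultimately show ?thesis unfolding Inv_def using v by (simp add: star_def r[simplified] less_Suc_eq)
qed

lemma nth_ins_lt: "i < r \<Longrightarrow> r \<le> length l \<Longrightarrow> (take r l @ [x] @ drop r l) ! i = l ! i"
  by (simp add: nth_append)
lemma nth_ins_eq: "r \<le> length l \<Longrightarrow> (take r l @ [x] @ drop r l) ! r = x"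
  by (simp add: nth_append)
lemma nth_ins_gt: "r \<le> i \<Longrightarrow> i < length l \<Longrightarrow> (take r l @ [x] @ drop r l) ! Suc i = l ! i"
  by (simp add: nth_append)

lemma Inv_step:
  assumes I: "Inv A s r"
  shows "Inv A (fst (adv_step A s r)) (snd (adv_step A s r))"
proof -
  let ?ns = "rotation s 0"
  let ?d = "length s"
  have vs: "valid_stream s" and st: "star s" and d2: "2 \<le> ?d" and r1: "1 \<le> r" and rd: "r < ?d"
    and nr: "?ns ! r = ?d" and n0: "?ns ! 0 = 1"
    and g: "gap_hi A s r - gap_lo A s r \<le> 2 * pi / 2 ^ (?d - 2)"
    using I unfolding Inv_def by auto
  have len: "length ?ns = ?d" and setns: "set ?ns \<subseteq> {1..?d}" using star_rot[OF st] by auto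
  have elem: "\<And>i. i < ?d \<Longrightarrow> ?ns ! i \<le> ?d"
    using setns len by (metis atLeastAtMost_iff nth_mem subsetD)
  have pw: "(2::real) ^ (Suc ?d - 2) = 2 * 2 ^ (?d - 2)"
    using d2 by (metis Suc_diff_le power_Suc)
  show ?thesis
  proof (cases "2 * (gap_mid A s r - gap_lo A s r) \<le> gap_hi A s r - gap_lo A s r")
    case True
    let ?s' = "s @ [(0, r)]"
    have e: "adv_step A s r = (?s', r)" unfolding adv_step_def using True by simp
    have ns': "rotation ?s' 0 = take r ?ns @ [Suc ?d] @ drop r ?ns" by (rule rotation_snoc0)
    have v': "valid_stream ?s'" by (rule valid_snoc[OF vs]) (use len d2 r1 rd in auto)
    have x: "(take r ?ns @ [Suc ?d] @ drop r ?ns) ! (r - 1) = ?ns ! (r - 1)"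
      by (rule nth_ins_lt) (use r1 rd len in auto)
    have lo: "gap_lo A ?s' r = gap_lo A s r"
      unfolding gap_lo_def ns' x using r1 rd len d2
      by (intro angl_append elem) auto
    have x2: "(take r ?ns @ [Suc ?d] @ drop r ?ns) ! Suc r = ?ns ! r"
      by (rule nth_ins_gt) (use r1 rd len in auto)
    have hi: "gap_hi A ?s' r = gap_mid A s r"
      unfolding gap_hi_def gap_mid_def ns' x2 using r1 rd len d2
      by (simp add: angl_append elem)
    have "gap_hi A ?s' r - gap_lo A ?s' r \<le> (gap_hi A s r - gap_lo A s r) / 2"
      using True unfolding lo hi by simp
    also have "\<dots> \<le> (2 * pi / 2 ^ (?d - 2)) / 2" by (rule divide_right_mono[OF g]) simp
    also have "\<dots> = 2 * pi / 2 ^ (length ?s' - 2)" using pw by simp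
    finally have "gap_hi A ?s' r - gap_lo A ?s' r \<le> 2 * pi / 2 ^ (length ?s' - 2)" .
    moreover have "(take r ?ns @ Suc ?d # drop r ?ns) ! r = Suc ?d"
      using rd len by (simp add: nth_append)
    moreover have "(take r ?ns @ Suc ?d # drop r ?ns) ! 0 = 1"
      using rd len r1 n0 by (simp add: nth_append)
    ultimately show ?thesis unfolding e Inv_def using v' st star_snoc[of s r] d2 r1 rd len n0
      by (simp add: ns')
  next
    case False
    let ?s' = "s @ [(0, Suc r)]"
    have e: "adv_step A s r = (?s', Suc r)" unfolding adv_step_def using False by simp
    have ns': "rotation ?s' 0 = take (Suc r) ?ns @ [Suc ?d] @ drop (Suc r) ?ns" by (rule rotation_snoc0)
    have v': "valid_stream ?s'" by (rule valid_snoc[OF vs]) (use len d2 r1 rd in auto)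
    have x: "(take (Suc r) ?ns @ [Suc ?d] @ drop (Suc r) ?ns) ! r = ?ns ! r"
      by (rule nth_ins_lt) (use r1 rd len in auto)
    have lo: "gap_lo A ?s' (Suc r) = gap_mid A s r"
      unfolding gap_lo_def gap_mid_def ns' using r1 rd len d2 x
      by (simp add: angl_append elem)
    have x2: "Suc r < ?d \<Longrightarrow> (take (Suc r) ?ns @ [Suc ?d] @ drop (Suc r) ?ns) ! Suc (Suc r) = ?ns ! Suc r"
      by (rule nth_ins_gt) (use r1 rd len in auto)
    have hi: "gap_hi A ?s' (Suc r) = gap_hi A s r"
      unfolding gap_hi_def ns' using r1 rd len d2 x2
      by (simp add: angl_append elem)
    have "gap_hi A ?s' (Suc r) - gap_lo A ?s' (Suc r) \<le> (gap_hi A s r - gap_lo A s r) / 2"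
      using False unfolding lo hi by simp
    also have "\<dots> \<le> (2 * pi / 2 ^ (?d - 2)) / 2" by (rule divide_right_mono[OF g]) simp
    also have "\<dots> = 2 * pi / 2 ^ (length ?s' - 2)" using pw by simp
    finally have "gap_hi A ?s' (Suc r) - gap_lo A ?s' (Suc r) \<le> 2 * pi / 2 ^ (length ?s' - 2)" .
    moreover have "(take (Suc r) ?ns @ Suc ?d # drop (Suc r) ?ns) ! Suc r = Suc ?d"
      using rd len by (simp add: nth_append)
    moreover have "(take (Suc r) ?ns @ Suc ?d # drop (Suc r) ?ns) ! 0 = 1"
      using rd len r1 n0 by (simp add: nth_append)
    ultimately show ?thesis unfolding e Inv_def using v' st star_snoc[of s "Suc r"] d2 r1 rd len n0
      by (simp add: ns')
  qed
qed

lemma Inv_adv: "Inv A (fst (adv A k)) (snd (adv A k)) \<and> length (fst (adv A k)) = k + 2"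
proof (induction k)
  case 0
  then show ?case using Inv_init by simp
next
  case (Suc k)
  then show ?case using Inv_step[of A "fst (adv A k)" "snd (adv A k)"]
    by (auto simp: adv_step_def)
qed

lemma Im_times_real: "Im (z * of_real c) = Im z * c"
  by simp

lemma key_bound:
  fixes a b h :: complex
  assumes "a \<noteq> 0" "b \<noteq> 0" "h \<noteq> 0" "Arg2pi (h/a) \<le> Arg2pi (h/b)"
  shows "Im (a * cnj b) = cmod a * cmod b * sin (Arg2pi (h/b) - Arg2pi (h/a))"
proof -
  have "Arg2pi ((h/b) / (h/a)) = Arg2pi (h/b) - Arg2pi (h/a)"
    using assms by (intro Arg2pi_divide) auto
  moreover have "(h/b) / (h/a) = a / b" using assms by (simp add: field_simps)
  ultimately have th: "Arg2pi (a/b) = Arg2pi (h/b) - Arg2pi (h/a)" by simp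
  have bb: "b * cnj b = of_real ((cmod b)^2)" by (rule complex_norm_square[symmetric])
  have "a * cnj b = (a / b) * (b * cnj b)" using assms by (simp add: field_simps)
  then have "a * cnj b = (a / b) * of_real ((cmod b)^2)" by (simp only: bb)
  then have "Im (a * cnj b) = Im (a/b) * (cmod b)^2" by (simp only: Im_times_real)
  also have "Im (a/b) = cmod (a/b) * sin (Arg2pi (a/b))" by (simp add: sin_Arg2pi)
  finally show ?thesis using assms unfolding th by (simp add: norm_divide power2_eq_square)
qed

lemma final_num:
  fixes W H :: int and p q :: real and n :: nat
  assumes "1 \<le> W" "1 \<le> H" "p \<le> W + H" "q \<le> W + H" "0 \<le> p" "0 \<le> q" "2 ^ n \<le> 8 * pi * (p * q)"
  shows "1/16 * 2 powr (real n / 2) \<le> real_of_int (W * H)"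
proof -
  define X where "X = real_of_int (W * H)"
  have X2: "real_of_int (W + H) \<le> 2 * X"
  proof -
    have "W + H \<le> 2 * (W * H)"
    proof -
      have "W \<le> W * H" using assms(1,2) by (simp add: mult_le_cancel_left1)
      moreover have "H \<le> W * H" using assms(1,2) by (simp add: mult_le_cancel_right1)
      ultimately show ?thesis by linarith
    qed
    then show ?thesis unfolding X_def by linarith
  qed
  have pq: "p * q \<le> (real_of_int (W + H))^2"
    using mult_mono[OF assms(3,4)] assms(1,2,5,6) by (simp add: power2_eq_square)
  have "(real_of_int (W + H))^2 \<le> (2 * X)^2"
    using X2 assms(1,2) by (intro power_mono) auto
  then have "p * q \<le> 4 * X^2" using pq by (simp add: power_mult_distrib)
  then have "8 * pi * (p * q) \<le> 8 * pi * (4 * X^2)" using pi_gt_zero by (intro mult_left_mono) auto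
  then have "2 ^ n \<le> 8 * pi * (4 * X^2)" using assms(7) by linarith
  moreover have "8 * pi * (4 * X^2) \<le> 256 * X^2" using pi_less_4 by (simp add: mult_right_mono)
  ultimately have "2 ^ n \<le> 256 * X^2" by linarith
  moreover have "(1/16 * 2 powr (real n / 2))^2 = 2 ^ n / 256"
  proof -
    have "(2 powr (real n / 2))^2 = 2 powr (real n / 2) * 2 powr (real n / 2)" by (simp add: power2_eq_square)
    also have "\<dots> = 2 powr (real n)" by (simp add: powr_add[symmetric])
    also have "\<dots> = 2 ^ n" by (simp add: powr_realpow)
    finally show ?thesis by (simp add: power_divide)
  qed
  ultimately have "(1/16 * 2 powr (real n / 2))^2 \<le> X^2" by simp
  moreover have "0 \<le> X" unfolding X_def using assms(1,2) by simp
  ultimately show ?thesis unfolding X_def[symmetric] by (rule power2_le_imp_le)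
qed

lemma pt_inj: "pt p = pt q \<Longrightarrow> p = q"
  unfolding pt_def by (cases p; cases q) auto

theorem theorem1:
  fixes A :: "(nat \<times> nat) list \<Rightarrow> int \<times> int"
  assumes "streaming_algorithm A"
  shows "\<exists>c > 0. \<exists>N. \<forall>n \<ge> N. \<exists>s. valid_stream s \<and> length s = n \<and>
           real_of_int (drawing_area s (placement A s)) \<ge> c * 2 powr (real n / 2)"
proof (intro exI[of _ "1/16"] conjI exI[of _ 4] allI impI)
  show "(0::real) < 1/16" by simp
  fix n :: nat assume n4: "4 \<le> n"
  define S where "S = fst (adv A (n - 2))"
  define r where "r = snd (adv A (n - 2))"
  have I: "Inv A S r" and lenS: "length S = n"
    using Inv_adv[of A "n - 2"] n4 unfolding S_def r_def by auto
  let ?ns = "rotation S 0"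
  let ?P = "placement A S"
  have vs: "valid_stream S" and st: "star S" and r1: "1 \<le> r" and rd: "r < n"
    and nr: "?ns ! r = n" and n0: "?ns ! 0 = 1"
    and g: "gap_hi A S r - gap_lo A S r \<le> 2 * pi / 2 ^ (n - 2)"
    using I lenS unfolding Inv_def by auto
  have len: "length ?ns = n" and setns: "set ?ns \<subseteq> {1..n}" using star_rot[OF st] lenS by auto
  have gd: "good_drawing S ?P" using assms vs unfolding streaming_algorithm_def by blast
  have inj: "inj_on ?P {0..n}" using gd lenS unfolding good_drawing_def tree_verts_def by auto
  define dir where "dir = (\<lambda>w. pt (?P w) - pt (?P 0))"
  have sorted: "sorted_wrt (<) (map (\<lambda>w. cw_angle (dir (hd ?ns)) (dir w)) ?ns)"
    using gd lenS unfolding good_drawing_def tree_verts_def dir_def Let_def by auto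
  have "?ns \<noteq> []" using len n4 by auto
  then have hd: "hd ?ns = 1" using n0 by (simp add: hd_conv_nth)
  have angl_eq: "\<And>v. angl A S v = cw_angle (dir 1) (dir v)" unfolding angl_def dir_def by simp
  have srt: "\<And>i j. i < j \<Longrightarrow> j < n \<Longrightarrow> angl A S (?ns ! i) < angl A S (?ns ! j)"
    using sorted len unfolding sorted_wrt_iff_nth_less hd angl_eq by auto
  define L where "L = ?ns ! (r - 1)"
  have lo: "gap_lo A S r = angl A S L" unfolding gap_lo_def L_def by simp
  have mid: "gap_mid A S r = angl A S n" unfolding gap_mid_def nr by simp
  have lo_mid: "angl A S L < angl A S n"
    using srt[of "r - 1" r] r1 rd nr unfolding L_def by simp
  have mid_hi: "angl A S n < gap_hi A S r"
  proof (cases "Suc r < n")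
    case True
    then show ?thesis using srt[of r "Suc r"] nr unfolding gap_hi_def lenS by simp
  next
    case False
    then show ?thesis unfolding gap_hi_def lenS angl_def cw_angle_def using Arg2pi_lt_2pi by simp
  qed
  define \<theta> where "\<theta> = angl A S n - angl A S L"
  have th0: "0 < \<theta>" using lo_mid unfolding \<theta>_def by simp
  have thb: "\<theta> \<le> 2 * pi / 2 ^ (n - 2)" using g mid_hi lo unfolding \<theta>_def by simp
  have p2: "(2::real) ^ n = 4 * 2 ^ (n - 2)"
  proof -
    have "n = (n - 2) + 2" using n4 by simp
    then have "(2::real) ^ n = 2 ^ ((n - 2) + 2)" by (rule arg_cong)
    also have "\<dots> = 2 ^ (n - 2) * 2 ^ 2" by (rule power_add)
    finally show ?thesis by simp
  qed
  have thb2: "\<theta> \<le> 8 * pi / 2 ^ n" using thb p2 by (simp add: field_simps)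
  have "(2::real) ^ n \<ge> 16"
  proof -
    have "(2::real) ^ 4 \<le> 2 ^ n" using n4 by (intro power_increasing) auto
    then show ?thesis by simp
  qed
  then have "8 * pi / 2 ^ n \<le> 8 * pi / 16" using pi_gt_zero by (intro divide_left_mono) auto
  then have thpi: "\<theta> < pi" using thb2 pi_gt_zero by linarith
  have Lin: "L \<in> {1..n}" unfolding L_def using setns len r1 rd
    by (metis Suc_le_lessD Suc_pred' less_imp_diff_less nth_mem subsetD)
  have dir_nz: "\<And>v. v \<in> {1..n} \<Longrightarrow> dir v \<noteq> 0"
  proof
    fix v assume v: "v \<in> {1..n}" and "dir v = 0"
    then have "?P v = ?P 0" unfolding dir_def using pt_inj by auto
    with inj v have "v = 0" by (auto dest: inj_onD)
    with v show False by simp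
  qed
  define a where "a = dir L"
  define b where "b = dir n"
  define h where "h = dir 1"
  have anz: "a \<noteq> 0" unfolding a_def using dir_nz Lin by simp
  have bnz: "b \<noteq> 0" unfolding b_def using dir_nz n4 by simp
  have hnz: "h \<noteq> 0" unfolding h_def using dir_nz n4 by simp
  have argL: "Arg2pi (h/a) = angl A S L" unfolding angl_eq cw_angle_def a_def h_def ..
  have argn: "Arg2pi (h/b) = angl A S n" unfolding angl_eq cw_angle_def b_def h_def ..
  have D: "Im (a * cnj b) = cmod a * cmod b * sin \<theta>"
    using key_bound[OF anz bnz hnz] argL argn lo_mid unfolding \<theta>_def by simp
  define ax where "ax = fst (?P L) - fst (?P 0)"
  define ay where "ay = snd (?P L) - snd (?P 0)"
  define bx where "bx = fst (?P n) - fst (?P 0)"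
  define by' where "by' = snd (?P n) - snd (?P 0)"
  have ab: "a = Complex (of_int ax) (of_int ay)" "b = Complex (of_int bx) (of_int by')"
    unfolding a_def b_def dir_def pt_def ax_def ay_def bx_def by'_def by (simp_all add: complex_eq_iff)
  have Dint: "Im (a * cnj b) = of_int (ay * bx - ax * by')" unfolding ab by simp
  have sinpos: "0 < sin \<theta>" using sin_gt_zero th0 thpi by simp
  have Dpos: "0 < ay * bx - ax * by'"
  proof -
    have "0 < cmod a * cmod b * sin \<theta>" using anz bnz sinpos by simp
    then have "real_of_int 0 < real_of_int (ay * bx - ax * by')" using D Dint by simp
    then show ?thesis by (simp only: of_int_less_iff)
  qed
  have "1 \<le> ay * bx - ax * by'" using Dpos by simp
  then have "real_of_int 1 \<le> real_of_int (ay * bx - ax * by')" by (simp only: of_int_le_iff)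
  then have "1 \<le> cmod a * cmod b * sin \<theta>" using D Dint by simp
  also have "\<dots> \<le> cmod a * cmod b * \<theta>" using sin_x_le_x th0 by (intro mult_left_mono) auto
  also have "\<dots> \<le> cmod a * cmod b * (8 * pi / 2 ^ n)" using thb2 by (intro mult_left_mono) auto
  finally have prod: "2 ^ n \<le> 8 * pi * (cmod a * cmod b)" by (simp add: field_simps)
  define X where "X = (\<lambda>v. fst (?P v)) ` tree_verts S"
  define Y where "Y = (\<lambda>v. snd (?P v)) ` tree_verts S"
  have tv: "tree_verts S = {0..n}" unfolding tree_verts_def lenS ..
  have finX: "finite X" "finite Y" unfolding X_def Y_def tv by auto
  have inX: "\<And>v. v \<in> {0..n} \<Longrightarrow> fst (?P v) \<in> X" unfolding X_def tv by auto
  have inY: "\<And>v. v \<in> {0..n} \<Longrightarrow> snd (?P v) \<in> Y" unfolding Y_def tv by auto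
  define W where "W = Max X - Min X"
  define H where "H = Max Y - Min Y"
  have wb: "\<And>u v. u \<in> {0..n} \<Longrightarrow> v \<in> {0..n} \<Longrightarrow> \<bar>fst (?P u) - fst (?P v)\<bar> \<le> W"
  proof -
    fix u v assume "u \<in> {0..n}" "v \<in> {0..n}"
    then have "fst (?P u) \<le> Max X" "fst (?P v) \<le> Max X" "Min X \<le> fst (?P u)" "Min X \<le> fst (?P v)"
      using inX finX by auto
    then show "\<bar>fst (?P u) - fst (?P v)\<bar> \<le> W" unfolding W_def by linarith
  qed
  have hb: "\<And>u v. u \<in> {0..n} \<Longrightarrow> v \<in> {0..n} \<Longrightarrow> \<bar>snd (?P u) - snd (?P v)\<bar> \<le> H"
  proof -
    fix u v assume "u \<in> {0..n}" "v \<in> {0..n}"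
    then have "snd (?P u) \<le> Max Y" "snd (?P v) \<le> Max Y" "Min Y \<le> snd (?P u)" "Min Y \<le> snd (?P v)"
      using inY finX by auto
    then show "\<bar>snd (?P u) - snd (?P v)\<bar> \<le> H" unfolding H_def by linarith
  qed
  have L0: "L \<in> {0..n}" "n \<in> {0..n}" "0 \<in> {0..n}" using Lin by auto
  have bax: "\<bar>ax\<bar> \<le> W" "\<bar>bx\<bar> \<le> W" unfolding ax_def bx_def using wb L0 by auto
  have bay: "\<bar>ay\<bar> \<le> H" "\<bar>by'\<bar> \<le> H" unfolding ay_def by'_def using hb L0 by auto
  have W1: "1 \<le> W"
  proof (rule ccontr)
    assume "\<not> 1 \<le> W"
    then have "ax = 0" "bx = 0" using bax by auto
    then show False using Dpos by simp
  qed
  have H1: "1 \<le> H"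
  proof (rule ccontr)
    assume "\<not> 1 \<le> H"
    then have "ay = 0" "by' = 0" using bay by auto
    then show False using Dpos by simp
  qed
  have ca: "cmod a \<le> real_of_int (W + H)"
    using cmod_le[of a] bax bay unfolding ab by simp
  have cb: "cmod b \<le> real_of_int (W + H)"
    using cmod_le[of b] bax bay unfolding ab by simp
  have area: "drawing_area S ?P = W * H"
    unfolding drawing_area_def W_def H_def X_def Y_def Let_def ..
  show "\<exists>s. valid_stream s \<and> length s = n \<and>
           1/16 * 2 powr (real n / 2) \<le> real_of_int (drawing_area s (placement A s))"
  proof (intro exI[of _ S] conjI)
    show "1/16 * 2 powr (real n / 2) \<le> real_of_int (drawing_area S (placement A S))"
      unfolding area using final_num[OF W1 H1 ca cb _ _ prod] by simp
  qed (use vs lenS in auto)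
qed

end
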